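(* Let $\mathrm{G}$ be a complex semisimple Lie group and $\mathrm{G}_0$ a real form with compatible Iwasawa factorizations. Then the restriction to $\mathfrak{g}_0$ of the Toda vector field on $\mathfrak{g}$ equals the Toda vector field on $\mathfrak{g}_0$ defined by the Iwasawa factorization $\mathrm{G}_0=\mathrm{K}_0\mathrm{A}_0\mathrm{N}_0$.
   Context: $\mathrm{G}$ is a connected complex semisimple Lie group with Lie algebra $\mathfrak{g}$, with an anti-holomorphic Cartan involution $\theta$ (fixed points the maximal compact $\mathrm{K}$, $\mathfrak{g}=\mathfrak{k}\oplus\mathfrak{p}$), a maximal abelian $\mathfrak{a}\subset\mathfrak{p}$ and a root ordering of $(\mathfrak{g},\mathfrak{a})$; $\mathfrak{n}$ is the sum of positive root spaces, $\mathfrak{u}=\mathfrak{a}\oplus\mathfrak{n}$, $\mathfrak{h}=i\mathfrak{a}\oplus\mathfrak{a}$. The Toda vector field on $\mathfrak{g}$ is $X'=[X,\pi_{\mathfrak{k}}X]$, $\pi_{\mathfrak{k}}$ the projection along $\mathfrak{u}$. A real form $\mathrm{G}_0$ is the fixed-point set of an anti-holomorphic involution $\tau$ of $\mathrm{G}$. Compatibility means: (c) $\tau\theta=\theta\tau$; (d) $\mathfrak{h}$ is $\tau$-invariant with fixed-point set $\mathfrak{h}_0$ a maximally non-compact Cartan subalgebra of $\mathfrak{g}_0$, i.e. $\mathfrak{a}_0=\mathfrak{a}^\tau$ is maximal abelian in $\mathfrak{p}_0=\mathfrak{p}^\tau$; (e) roots of $(\mathfrak{g},\mathfrak{a})$ agreeing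 on $\mathfrak{a}_0$ have the same sign. Then $\theta$ restricts to $\mathrm{G}_0$, $\mathfrak{g}_0=\mathfrak{k}_0\oplus\mathfrak{p}_0$ with $\mathfrak{k}_0=\mathfrak{k}\cap\mathfrak{g}_0$, the restricted roots of $(\mathfrak{g}_0,\mathfrak{a}_0)$ are ordered by declaring positive those that are restrictions of positive roots, $\mathfrak{n}_0$ is the sum of positive restricted root spaces, $\mathrm{K}_0$ is the fixed-point set of $\theta$ in $\mathrm{G}_0$, $\mathrm{A}_0,\mathrm{N}_0$ the connected subgroups integrating $\mathfrak{a}_0,\mathfrak{n}_0$, and $\mathrm{G}_0=\mathrm{K}_0\mathrm{A}_0\mathrm{N}_0$. The Toda vector field on $\mathfrak{g}_0$ is $X'=[X,\pi_{\mathfrak{k}_0}X]$, $\pi_{\mathfrak{k}_0}$ the projection onto $\mathfrak{k}_0$ along $\mathfrak{u}_0=\mathfrak{a}_0\oplus\mathfrak{n}_0$. *)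

theory Defs
  imports "HOL-Analysis.Analysis"
begin

text \<open>
  Model: the complex semisimple Lie algebra g is the complex vector space complex^'n
  (finite dimensional, dimension CARD('n)) equipped with a Lie bracket br.
  Complex scalar multiplication is (*s); real subspaces are the usual subspace / span
  (complex^'n is a real vector space), complex subspaces are vec.subspace / vec.span.
\<close>

type_synonym 'n cvec = "complex ^ 'n"

definition lie_bracket :: "('n::finite cvec \<Rightarrow> 'n cvec \<Rightarrow> 'n cvec) \<Rightarrow> bool" where
  "lie_bracket br \<longleftrightarrow>
     (\<forall>a x y z. br (a *s x + y) z = a *s br x z + br y z) \<and>
     (\<forall>a x y z. br z (a *s x + y) = a *s br z x + br z y) \<and>
     (\<forall>x. br x x = 0) \<and>
     (\<forall>x y z. br x (br y z) + br y (br z x) + br z (br x y) = 0)"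

definition lie_ideal :: "('n::finite cvec \<Rightarrow> 'n cvec \<Rightarrow> 'n cvec) \<Rightarrow> 'n cvec set \<Rightarrow> bool" where
  "lie_ideal br I \<longleftrightarrow> vec.subspace I \<and> (\<forall>x y. y \<in> I \<longrightarrow> br x y \<in> I)"

fun derived_series :: "('n::finite cvec \<Rightarrow> 'n cvec \<Rightarrow> 'n cvec) \<Rightarrow> 'n cvec set \<Rightarrow> nat \<Rightarrow> 'n cvec set" where
  "derived_series br I 0 = I"
| "derived_series br I (Suc k) =
     vec.span {br x y | x y. x \<in> derived_series br I k \<and> y \<in> derived_series br I k}"

definition solvable_ideal :: "('n::finite cvec \<Rightarrow> 'n cvec \<Rightarrow> 'n cvec) \<Rightarrow> 'n cvec set \<Rightarrow> bool" where
  "solvable_ideal br I \<longleftrightarrow> (\<exists>k. derived_series br I k = {0})"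

definition semisimple :: "('n::finite cvec \<Rightarrow> 'n cvec \<Rightarrow> 'n cvec) \<Rightarrow> bool" where
  "semisimple br \<longleftrightarrow> lie_bracket br \<and>
     (\<forall>I. lie_ideal br I \<and> solvable_ideal br I \<longrightarrow> I = {0})"

definition ad_mat :: "('n::finite cvec \<Rightarrow> 'n cvec \<Rightarrow> 'n cvec) \<Rightarrow> 'n cvec \<Rightarrow> complex ^ 'n ^ 'n" where
  "ad_mat br x = (\<chi> i j. br x (axis j 1) $ i)"

definition killing :: "('n::finite cvec \<Rightarrow> 'n cvec \<Rightarrow> 'n cvec) \<Rightarrow> 'n cvec \<Rightarrow> 'n cvec \<Rightarrow> complex" where
  "killing br x y = (\<Sum>i\<in>UNIV. (ad_mat br x ** ad_mat br y) $ i $ i)"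

definition antiholo_invol :: "('n::finite cvec \<Rightarrow> 'n cvec \<Rightarrow> 'n cvec) \<Rightarrow> ('n cvec \<Rightarrow> 'n cvec) \<Rightarrow> bool" where
  "antiholo_invol br s \<longleftrightarrow>
     (\<forall>a x y. s (a *s x + y) = cnj a *s s x + s y) \<and>
     (\<forall>x y. s (br x y) = br (s x) (s y)) \<and>
     (\<forall>x. s (s x) = x)"

text \<open>Cartan involution of the underlying real Lie algebra g_R: its Killing form is 2 Re B,
  and B_{g_R}(X, theta X) must be negative definite.\<close>

definition cartan_involution :: "('n::finite cvec \<Rightarrow> 'n cvec \<Rightarrow> 'n cvec) \<Rightarrow> ('n cvec \<Rightarrow> 'n cvec) \<Rightarrow> bool" where
  "cartan_involution br th \<longleftrightarrow> antiholo_invol br th \<and>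
     (\<forall>x. x \<noteq> 0 \<longrightarrow> Re (killing br x (th x)) < 0)"

definition fixed_set :: "('n::finite cvec \<Rightarrow> 'n cvec) \<Rightarrow> 'n cvec set" where
  "fixed_set s = {x. s x = x}"

definition minus_set :: "('n::finite cvec \<Rightarrow> 'n cvec) \<Rightarrow> 'n cvec set" where
  "minus_set s = {x. s x = - x}"

definition abelian :: "('n::finite cvec \<Rightarrow> 'n cvec \<Rightarrow> 'n cvec) \<Rightarrow> 'n cvec set \<Rightarrow> bool" where
  "abelian br A \<longleftrightarrow> (\<forall>x\<in>A. \<forall>y\<in>A. br x y = 0)"

definition max_abelian_in :: "('n::finite cvec \<Rightarrow> 'n cvec \<Rightarrow> 'n cvec) \<Rightarrow> 'n cvec set \<Rightarrow> 'n cvec set \<Rightarrow> bool" where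
  "max_abelian_in br A P \<longleftrightarrow> subspace A \<and> A \<subseteq> P \<and> abelian br A \<and>
     (\<forall>B. subspace B \<and> A \<subseteq> B \<and> B \<subseteq> P \<and> abelian br B \<longrightarrow> B = A)"

text \<open>A root is a real functional on A, represented as a function
  that vanishes outside A (so that roots are determined by their values on A).\<close>

definition root_space :: "('n::finite cvec \<Rightarrow> 'n cvec \<Rightarrow> 'n cvec) \<Rightarrow> 'n cvec set \<Rightarrow> 'n cvec set \<Rightarrow> ('n cvec \<Rightarrow> real) \<Rightarrow> 'n cvec set" where
  "root_space br L A \<alpha> = {X \<in> L. \<forall>H\<in>A. br H X = complex_of_real (\<alpha> H) *s X}"

definition roots :: "('n::finite cvec \<Rightarrow> 'n cvec \<Rightarrow> 'n cvec) \<Rightarrow> 'n cvec set \<Rightarrow> 'n cvec set \<Rightarrow> ('n cvec \<Rightarrow> real) set" where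
  "roots br L A = {\<alpha>. (\<forall>x. x \<notin> A \<longrightarrow> \<alpha> x = 0) \<and> (\<exists>H\<in>A. \<alpha> H \<noteq> 0) \<and>
                       root_space br L A \<alpha> \<noteq> {0}}"

definition root_ordering :: "('n::finite cvec \<Rightarrow> 'n cvec \<Rightarrow> 'n cvec) \<Rightarrow> 'n cvec set \<Rightarrow> ('n cvec \<Rightarrow> real) set \<Rightarrow> bool" where
  "root_ordering br A Pos \<longleftrightarrow> (\<exists>H0\<in>A. (\<forall>\<alpha>\<in>roots br UNIV A. \<alpha> H0 \<noteq> 0) \<and>
       Pos = {\<alpha>\<in>roots br UNIV A. \<alpha> H0 > 0})"

definition nilp :: "('n::finite cvec \<Rightarrow> 'n cvec \<Rightarrow> 'n cvec) \<Rightarrow> 'n cvec set \<Rightarrow> 'n cvec set \<Rightarrow> ('n cvec \<Rightarrow> real) set \<Rightarrow> 'n cvec set" where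
  "nilp br L A Pos = span (\<Union>\<alpha>\<in>Pos. root_space br L A \<alpha>)"

definition set_sum :: "'n::finite cvec set \<Rightarrow> 'n cvec set \<Rightarrow> 'n cvec set" where
  "set_sum A B = {a + b | a b. a \<in> A \<and> b \<in> B}"

definition proj_along :: "'n::finite cvec set \<Rightarrow> 'n cvec set \<Rightarrow> 'n cvec \<Rightarrow> 'n cvec" where
  "proj_along K U X = (THE k. k \<in> K \<and> X - k \<in> U)"

definition toda :: "('n::finite cvec \<Rightarrow> 'n cvec \<Rightarrow> 'n cvec) \<Rightarrow> 'n cvec set \<Rightarrow> 'n cvec set \<Rightarrow> 'n cvec \<Rightarrow> 'n cvec" where
  "toda br K U X = br X (proj_along K U X)"

end

theory Submission
  imports Defs
begin

lemma scaleR_cvec: "r *\<^sub>R (x::complex^'n::finite) = complex_of_real r *s x"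
  by (rule vec_eq_iff[THEN iffD2], rule allI, simp only: vector_scaleR_component vector_smult_component) (simp add: scaleR_conv_of_real)

lemma msub_r: "((A::'a::comm_ring_1^'n::finite^'m::finite) - B) ** C = A ** C - B ** C"
  by (simp add: vec_eq_iff matrix_matrix_mult_def sum_subtractf algebra_simps)
lemma msub_l: "(A::'a::comm_ring_1^'n::finite^'m::finite) ** (B - C) = A ** B - A ** C"
  by (simp add: vec_eq_iff matrix_matrix_mult_def sum_subtractf algebra_simps)

locale AI =
  fixes br :: "complex^'n::finite \<Rightarrow> complex^'n \<Rightarrow> complex^'n" and s :: "complex^'n \<Rightarrow> complex^'n"
  assumes ai: "antiholo_invol br s"
begin
lemma s_lin: "s (a *s x + y) = cnj a *s s x + s y" using ai unfolding antiholo_invol_def by blast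
lemma s_br: "s (br x y) = br (s x) (s y)" using ai unfolding antiholo_invol_def by blast
lemma s_s[simp]: "s (s x) = x" using ai unfolding antiholo_invol_def by blast
lemma s_add: "s (x + y) = s x + s y" using s_lin[of 1 x y] by simp
lemma s_0[simp]: "s 0 = 0" using s_add[of 0 0] by simp
lemma s_smult: "s (a *s x) = cnj a *s s x" using s_lin[of a x 0] by simp
lemma s_scaleR: "s (r *\<^sub>R x) = r *\<^sub>R s x" by (simp add: scaleR_cvec s_smult)
lemma s_neg: "s (- x) = - s x" using s_smult[of "-1" x] by simp
lemma s_diff: "s (x - y) = s x - s y" using s_add[of x "-y"] s_neg by simp
lemma s_linear: "linear s" by (rule linearI) (simp_all add: s_add s_scaleR)
lemma s_inj: "s x = s y \<longleftrightarrow> x = y" by (metis s_s)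
lemma s_eq0: "s x = 0 \<longleftrightarrow> x = 0" by (metis s_0 s_s)
end

locale LB =
  fixes br :: "complex^'n::finite \<Rightarrow> complex^'n \<Rightarrow> complex^'n"
  assumes lb: "lie_bracket br"
begin
lemma lin_l: "br (a *s x + y) z = a *s br x z + br y z" using lb unfolding lie_bracket_def by blast
lemma lin_r: "br z (a *s x + y) = a *s br z x + br z y" using lb unfolding lie_bracket_def by blast
lemma alt[simp]: "br x x = 0" using lb unfolding lie_bracket_def by blast
lemma jac: "br x (br y z) + br y (br z x) + br z (br x y) = 0" using lb unfolding lie_bracket_def by blast
lemma add_l: "br (x + y) z = br x z + br y z" using lin_l[of 1 x y z] by simp
lemma add_r: "br z (x + y) = br z x + br z y" using lin_r[of z 1 x y] by simp
lemma zero_l[simp]: "br 0 z = 0" using add_l[of 0 0 z] by simp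
lemma zero_r[simp]: "br z 0 = 0" using add_r[of z 0 0] by simp
lemma smult_l: "br (a *s x) z = a *s br x z" using lin_l[of a x 0 z] by simp
lemma smult_r: "br z (a *s x) = a *s br z x" using lin_r[of z a x 0] by simp
lemma scaleR_l: "br (r *\<^sub>R x) z = r *\<^sub>R br x z" by (simp add: scaleR_cvec smult_l)
lemma scaleR_r: "br z (r *\<^sub>R x) = r *\<^sub>R br z x" by (simp add: scaleR_cvec smult_r)
lemma neg_l: "br (- x) z = - br x z" using smult_l[of "-1" x z] by simp
lemma neg_r: "br z (- x) = - br z x" using smult_r[of z "-1" x] by simp
lemma diff_l: "br (x - y) z = br x z - br y z" using add_l[of x "-y" z] neg_l by simp
lemma diff_r: "br z (x - y) = br z x - br z y" using add_r[of z x "-y"] neg_r by simp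
lemma anti: "br x y = - br y x"
proof -
  have "0 = br (x+y) (x+y)" by (rule alt[symmetric])
  also have "\<dots> = br x x + br y x + (br x y + br y y)" by (simp only: add_l add_r)
  also have "\<dots> = br x y + br y x" by simp
  finally have "br x y + br y x = 0" by simp
  then show ?thesis by (simp add: eq_neg_iff_add_eq_0)
qed
lemma jac2: "br (br x y) z = br x (br y z) - br y (br x z)"
proof -
  have "br (br x y) z = - br z (br x y)" by (rule anti)
  also have "\<dots> = br x (br y z) + br y (br z x)"
  proof -
    have h: "br x (br y z) + br y (br z x) = - br z (br x y)" using jac[of x y z] by (simp add: eq_neg_iff_add_eq_0)
    show ?thesis by (simp add: h)
  qed
  also have "br z x = - br x z" by (rule anti)
  finally show ?thesis by (simp add: neg_r)
qed
lemma vlin_r: "Vector_Spaces.linear (*s) (*s) (br x)"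
  unfolding Vector_Spaces.linear_iff using vec.vector_space_axioms
  by (simp add: add_r smult_r)
lemma linear_r: "linear (br x)" by (rule linearI) (simp_all add: add_r scaleR_r)
lemma linear_l: "linear (\<lambda>x. br x z)" by (rule linearI) (simp_all add: add_l scaleR_l)
lemma sum_r: "br x (sum f A) = (\<Sum>a\<in>A. br x (f a))"
  using vec.linear_sum[OF vlin_r] by blast
lemma br_comp: "br x v $ i = (\<Sum>k\<in>UNIV. v $ k * br x (axis k 1) $ i)"
proof -
  have "br x v = br x (\<Sum>k\<in>UNIV. v $ k *s axis k 1)" by (simp add: basis_expansion)
  also have "\<dots> = (\<Sum>k\<in>UNIV. v $ k *s br x (axis k 1))" by (simp add: sum_r smult_r)
  finally show ?thesis by (simp add: sum_component)
qed
lemma ad_br: "ad_mat br (br x y) = ad_mat br x ** ad_mat br y - ad_mat br y ** ad_mat br x"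
proof -
  have "br (br x y) (axis j 1) $ i = (\<Sum>k\<in>UNIV. br x (axis k 1) $ i * br y (axis j 1) $ k) - (\<Sum>k\<in>UNIV. br y (axis k 1) $ i * br x (axis j 1) $ k)" for i j
    by (simp add: jac2 br_comp[of x "br y (axis j 1)"] br_comp[of y "br x (axis j 1)"] mult.commute)
  then show ?thesis by (simp add: vec_eq_iff ad_mat_def matrix_matrix_mult_def)
qed
lemma killing_trace: "killing br x y = trace (ad_mat br x ** ad_mat br y)"
  by (simp add: killing_def trace_def)
lemma killing_invar: "killing br (br h x) z = - killing br x (br h z)"
proof -
  have t: "trace ((ad_mat br h ** ad_mat br x) ** ad_mat br z) = trace ((ad_mat br x ** ad_mat br z) ** ad_mat br h)"
    by (metis matrix_mul_assoc trace_mul_sym)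
  show ?thesis
  unfolding killing_trace ad_br
  by (simp add: msub_r msub_l trace_sub matrix_mul_assoc t)
qed
end

lemma quad0:
  fixes c d :: real
  assumes "\<forall>t. t * c + t^2 * d \<le> 0"
  shows "c = 0"
proof (rule ccontr)
  assume c: "c \<noteq> 0"
  define e where "e = \<bar>d\<bar> + 1"
  have e: "e > 0" unfolding e_def by simp
  define t where "t = c / e"
  have "t * c + t^2 * d \<le> 0" using assms by blast
  then have "(t * c + t^2 * d) * e^2 \<le> 0" using e by (simp add: mult_nonpos_nonneg)
  moreover have "(t * c + t^2 * d) * e^2 = c^2 * (e + d)"
    using e unfolding t_def by (simp add: field_simps power2_eq_square)
  moreover have "e + d > 0" unfolding e_def by linarith
  moreover have "c^2 > 0" using c by simp
  ultimately show False by (metis mult_pos_pos not_le)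
qed

lemma dim_ker1:
  fixes V :: "'a::euclidean_space set" and g :: "'a \<Rightarrow> real"
  assumes V: "subspace V" and g: "linear g"
  shows "dim V \<le> dim (V \<inter> {y. g y = 0}) + 1"
proof (cases "\<forall>v\<in>V. g v = 0")
  case True
  then have "V \<inter> {y. g y = 0} = V" by auto
  then show ?thesis by simp
next
  case False
  then obtain v0 where v0: "v0 \<in> V" "g v0 \<noteq> 0" by auto
  have "V \<subseteq> span (insert v0 (V \<inter> {y. g y = 0}))"
  proof
    fix v assume v: "v \<in> V"
    have "v - (g v / g v0) *\<^sub>R v0 \<in> V \<inter> {y. g y = 0}"
      using v v0 V g by (simp add: subspace_diff subspace_scale linear_diff linear_scale)
    then show "v \<in> span (insert v0 (V \<inter> {y. g y = 0}))"
      unfolding span_insert by (blast intro: span_base)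
  qed
  then have "dim V \<le> dim (insert v0 (V \<inter> {y. g y = 0}))"
    by (metis dim_span dim_subset)
  also have "\<dots> \<le> dim (V \<inter> {y. g y = 0}) + 1" by (simp add: dim_insert)
  finally show ?thesis .
qed

lemma dim_kerB:
  fixes W :: "'a::euclidean_space set" and g :: "'b \<Rightarrow> 'a \<Rightarrow> real"
  assumes fin: "finite B" and W: "subspace W" and g: "\<And>b. linear (g b)"
  shows "dim W \<le> dim (W \<inter> {y. \<forall>b\<in>B. g b y = 0}) + card B"
  using fin
proof (induction B rule: finite_induct)
  case empty then show ?case by simp
next
  case (insert b B)
  let ?W' = "W \<inter> {y. \<forall>b\<in>B. g b y = 0}"
  have sW': "subspace ?W'"
  proof -
    have "subspace {y. \<forall>b\<in>B. g b y = 0}"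
      unfolding subspace_def using g by (simp add: linear_add linear_scale linear_0)
    then show ?thesis using W subspace_inter by blast
  qed
  have eq: "W \<inter> {y. \<forall>b'\<in>insert b B. g b' y = 0} = ?W' \<inter> {y. g b y = 0}" by auto
  have "dim ?W' \<le> dim (?W' \<inter> {y. g b y = 0}) + 1" by (rule dim_ker1[OF sW' g])
  then show ?case using insert eq by simp
qed

locale CT = LB br + th: AI br \<theta>
  for br :: "complex^'n::finite \<Rightarrow> complex^'n \<Rightarrow> complex^'n" and \<theta> +
  assumes negdef: "\<And>x. x \<noteq> 0 \<Longrightarrow> Re (killing br x (\<theta> x)) < 0"
begin

lemma killing_sum: "killing br x y = (\<Sum>i\<in>UNIV. \<Sum>k\<in>UNIV. br x (axis k 1) $ i * br y (axis i 1) $ k)"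
  by (simp add: killing_def matrix_matrix_mult_def ad_mat_def)

lemma killing_add_l: "killing br (x + y) z = killing br x z + killing br y z"
  by (simp add: killing_sum add_l sum.distrib algebra_simps)
lemma killing_add_r: "killing br z (x + y) = killing br z x + killing br z y"
  by (simp add: killing_sum add_l sum.distrib algebra_simps)
lemma killing_scaleR_l: "killing br (r *\<^sub>R x) z = complex_of_real r * killing br x z"
  by (simp add: killing_sum smult_l scaleR_cvec sum_distrib_left algebra_simps)
lemma killing_scaleR_r: "killing br z (r *\<^sub>R x) = complex_of_real r * killing br z x"
  by (simp add: killing_sum smult_l scaleR_cvec sum_distrib_left algebra_simps)
lemma killing_neg_r: "killing br z (- x) = - killing br z x"
  by (simp add: killing_sum neg_l sum_negf)

definition P :: "complex^'n \<Rightarrow> complex^'n \<Rightarrow> real" where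
  "P x y = - Re (killing br x (\<theta> y))"

lemma P_add_l: "P (x + y) z = P x z + P y z" by (simp add: P_def killing_add_l)
lemma P_add_r: "P z (x + y) = P z x + P z y" by (simp add: P_def th.s_add killing_add_r)
lemma P_scaleR_l: "P (r *\<^sub>R x) z = r * P x z" by (simp add: P_def killing_scaleR_l)
lemma P_scaleR_r: "P z (r *\<^sub>R x) = r * P z x" by (simp add: P_def th.s_scaleR killing_scaleR_r)
lemma P_0_l[simp]: "P 0 z = 0" using P_scaleR_l[of 0 0 z] by simp
lemma P_0_r[simp]: "P z 0 = 0" using P_scaleR_r[of z 0 0] by simp
lemma P_neg_l: "P (- x) z = - P x z" using P_scaleR_l[of "-1" x z] by simp
lemma P_neg_r: "P z (- x) = - P z x" using P_scaleR_r[of z "-1" x] by simp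
lemma P_diff_l: "P (x - y) z = P x z - P y z" using P_add_l[of x "-y" z] by (simp add: P_neg_l)
lemma P_diff_r: "P z (x - y) = P z x - P z y" using P_add_r[of z x "-y"] by (simp add: P_neg_r)
lemma P_pos: "x \<noteq> 0 \<Longrightarrow> P x x > 0" using negdef[of x] by (simp add: P_def)
lemma P_self0: "P x x = 0 \<longleftrightarrow> x = 0" using P_pos[of x] by (metis P_0_l less_irrefl)
lemma P_bilinear: "bilinear P"
  unfolding bilinear_def
  by (auto intro!: linearI simp: P_add_l P_add_r P_scaleR_l P_scaleR_r)
lemma P_linear_r: "linear (P x)" using P_bilinear unfolding bilinear_def by blast
lemma P_linear_l: "linear (\<lambda>x. P x y)" using P_bilinear unfolding bilinear_def by blast

lemma selfadj: assumes "\<theta> H = - H" shows "P (br H x) y = P x (br H y)"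
proof -
  have "\<theta> (br H y) = - br H (\<theta> y)" by (simp add: th.s_br assms neg_l)
  then have "br H (\<theta> y) = - \<theta> (br H y)" by simp
  then show ?thesis by (simp add: P_def killing_invar killing_neg_r)
qed

lemma orth: assumes "\<theta> H = - H" "br H x = a *\<^sub>R x" "br H y = b *\<^sub>R y" "a \<noteq> b"
  shows "P x y = 0"
proof -
  have "a * P x y = b * P x y" using selfadj[OF assms(1), of x y] assms(2,3) by (simp add: P_scaleR_l P_scaleR_r)
  then show ?thesis using assms(4) by simp
qed

end

context CT begin
lemma P_exp: "P (a + t *\<^sub>R b) (c + t *\<^sub>R e) = P a c + t * P a e + t * P b c + t * t * P b e"
  by (simp add: P_add_l P_add_r P_scaleR_l P_scaleR_r algebra_simps)
lemma eigen:
  assumes W: "subspace W" and W0: "W \<noteq> {0}" and inv: "\<forall>w\<in>W. T w \<in> W" and T: "linear T"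
    and sa: "\<And>x y. P (T x) y = P x (T y)"
  shows "\<exists>x\<in>W. x \<noteq> 0 \<and> (\<exists>l. T x = l *\<^sub>R x)"
proof -
  define Sph where "Sph = sphere 0 1 \<inter> W"
  have cS: "compact Sph" unfolding Sph_def using closed_subspace[OF W] by (simp add: compact_Int_closed)
  obtain w0 where w0: "w0 \<in> W" "w0 \<noteq> 0" using W0 W subspace_0 by blast
  have "(1 / norm w0) *\<^sub>R w0 \<in> Sph" unfolding Sph_def using w0 W by (simp add: subspace_scale)
  then have neS: "Sph \<noteq> {}" by blast
  define f where "f w = P (T w) w / P w w" for w
  have cT: "continuous_on Sph T" using T by (simp add: linear_continuous_on linear_conv_bounded_linear)
  have cI: "continuous_on Sph (\<lambda>w. w)" by (rule continuous_on_id)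
  have c1: "continuous_on Sph (\<lambda>w. P (T w) w)" by (rule bilinear_continuous_on_compose[OF cT cI P_bilinear])
  have c2: "continuous_on Sph (\<lambda>w. P w w)" by (rule bilinear_continuous_on_compose[OF cI cI P_bilinear])
  have nz: "\<forall>w\<in>Sph. P w w \<noteq> 0"
  proof
    fix w assume "w \<in> Sph"
    then have "w \<noteq> 0" unfolding Sph_def by auto
    then show "P w w \<noteq> 0" using P_pos[of w] by linarith
  qed
  have cf: "continuous_on Sph f" unfolding f_def by (rule continuous_on_divide[OF c1 c2 nz])
  obtain x where x: "x \<in> Sph" and xmax: "\<forall>y\<in>Sph. f y \<le> f x"
    using continuous_attains_sup[OF cS neS cf] by blast
  define M where "M = f x"
  have xW: "x \<in> W" and x0: "x \<noteq> 0" using x unfolding Sph_def by auto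
  have Px: "P x x > 0" using P_pos[OF x0] .
  have PTx: "P (T x) x = M * P x x" unfolding M_def f_def using Px by simp
  have bound: "P (T w) w \<le> M * P w w" if wW: "w \<in> W" for w
  proof (cases "w = 0")
    case True then show ?thesis using T by (simp add: linear_0)
  next
    case False
    define u where "u = (1 / norm w) *\<^sub>R w"
    have uS: "u \<in> Sph" unfolding Sph_def u_def using False wW W by (simp add: subspace_scale)
    have "f u = f w" unfolding f_def u_def using False
      by (simp add: linear_scale[OF T] P_scaleR_l P_scaleR_r)
    then have "f w \<le> M" using xmax uS unfolding M_def by metis
    then show ?thesis unfolding f_def using P_pos[OF False] by (simp add: divide_le_eq)
  qed
  define y where "y = T x - M *\<^sub>R x"
  have yW: "y \<in> W" unfolding y_def using inv xW W by (simp add: subspace_diff subspace_scale)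
  define c where "c = P (T x) y + P (T y) x - M * (P x y + P y x)"
  define d where "d = P (T y) y - M * P y y"
  have "\<forall>t. t * c + t^2 * d \<le> 0"
  proof
    fix t
    have "x + t *\<^sub>R y \<in> W" using xW yW W by (simp add: subspace_add subspace_scale)
    from bound[OF this] have "P (T (x + t *\<^sub>R y)) (x + t *\<^sub>R y) \<le> M * P (x + t *\<^sub>R y) (x + t *\<^sub>R y)" .
    moreover have "T (x + t *\<^sub>R y) = T x + t *\<^sub>R T y" by (simp add: linear_add[OF T] linear_scale[OF T])
    ultimately have "P (T x) x + t * P (T x) y + t * P (T y) x + t * t * P (T y) y
        \<le> M * (P x x + t * P x y + t * P y x + t * t * P y y)"
      by (simp only: P_exp)
    moreover have "t * c + t^2 * d = (P (T x) x + t * P (T x) y + t * P (T y) x + t * t * P (T y) y)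
        - M * (P x x + t * P x y + t * P y x + t * t * P y y)"
      unfolding c_def d_def power2_eq_square using PTx by (simp add: algebra_simps)
    ultimately show "t * c + t^2 * d \<le> 0" by linarith
  qed
  then have "c = 0" by (rule quad0)
  moreover have "c = 2 * P y y"
  proof -
    have "P (T y) x = P y (T x)" by (rule sa)
    then show ?thesis unfolding c_def y_def
      by (simp add: P_diff_l P_diff_r P_scaleR_l P_scaleR_r algebra_simps)
  qed
  ultimately have "y = 0" using P_self0 by simp
  then have "T x = M *\<^sub>R x" unfolding y_def by simp
  then show ?thesis using xW x0 by blast
qed

end

locale IW = CT br \<theta> for br :: "complex^'n::finite \<Rightarrow> complex^'n \<Rightarrow> complex^'n" and \<theta> +
  fixes a :: "(complex^'n) set"
  assumes amax: "max_abelian_in br a (minus_set \<theta>)"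
begin

lemma a_sub: "subspace a" using amax unfolding max_abelian_in_def by blast
lemma a_p: "H \<in> a \<Longrightarrow> \<theta> H = - H" using amax unfolding max_abelian_in_def minus_set_def by blast
lemma a_ab: "H \<in> a \<Longrightarrow> H' \<in> a \<Longrightarrow> br H H' = 0" using amax unfolding max_abelian_in_def abelian_def by blast

definition E :: "(complex^'n) set" where
  "E = {X. \<exists>f. \<forall>H\<in>a. br H X = f H *\<^sub>R X}"

lemma br_span_inv: assumes H: "H \<in> a" and s: "s \<in> span E" shows "br H s \<in> span E"
proof -
  have sub: "subspace {s. br H s \<in> span E}"
    unfolding subspace_def by (simp add: add_r scaleR_r span_add span_scale span_zero)
  show ?thesis
  proof (rule span_induct[OF s sub])
    fix X assume "X \<in> E"
    then obtain f where "\<forall>H\<in>a. br H X = f H *\<^sub>R X" unfolding E_def by blast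
    then have "br H X = f H *\<^sub>R X" using H by blast
    then show "br H X \<in> span E" using \<open>X \<in> E\<close> by (simp add: span_base span_scale)
  qed
qed

lemma spanE: "span E = UNIV"
proof (rule ccontr)
  assume nS: "span E \<noteq> UNIV"
  define Sp where "Sp = {y. \<forall>s\<in>span E. P s y = 0}"
  have sub_Sp: "subspace Sp" unfolding subspace_def Sp_def by (simp add: P_add_r P_scaleR_r)
  have inv_Sp: "br H y \<in> Sp" if H: "H \<in> a" and y: "y \<in> Sp" for H y
    unfolding Sp_def mem_Collect_eq
  proof
    fix s assume s: "s \<in> span E"
    have "P s (br H y) = P (br H s) y" using selfadj[OF a_p[OF H]] by simp
    also have "\<dots> = 0" using y br_span_inv[OF H s] unfolding Sp_def by blast
    finally show "P s (br H y) = 0" .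
  qed
  have Sp_ne: "Sp \<noteq> {0}"
  proof -
    obtain B where B: "B \<subseteq> span E" "independent B" "span E \<subseteq> span B" "card B = dim (span E)"
      using basis_exists by blast
    have fin: "finite B" using B(2) by (rule eucl.finiteI_independent)
    have d1: "dim (UNIV::(complex^'n) set) \<le> dim (UNIV \<inter> {y. \<forall>b\<in>B. P b y = 0}) + card B"
      by (rule dim_kerB[OF fin subspace_UNIV P_linear_r])
    have sub1: "{y. \<forall>b\<in>B. P b y = 0} \<subseteq> Sp"
    proof
      fix y assume y: "y \<in> {y. \<forall>b\<in>B. P b y = 0}"
      have sub2: "subspace {s. P s y = 0}" unfolding subspace_def by (simp add: P_add_l P_scaleR_l)
      have "P s y = 0" if "s \<in> span B" for s
        by (rule span_induct[OF that sub2]) (use y in auto)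
      then show "y \<in> Sp" unfolding Sp_def using B(3) by blast
    qed
    have "dim (span E) \<noteq> DIM(complex^'n)" using nS dim_eq_full[of "span E"] by (simp add: span_span)
    moreover have "dim (span E) \<le> DIM(complex^'n)" by (rule dim_subset_UNIV)
    ultimately have "dim (span E) < dim (UNIV::(complex^'n) set)" by simp
    then have "0 < dim {y. \<forall>b\<in>B. P b y = 0}" using d1 B(4) by simp
    also have "\<dots> \<le> dim Sp" using sub1 by (rule dim_subset)
    finally have "\<not> Sp \<subseteq> {0}" using dim_eq_0[of Sp] by linarith
    then show ?thesis by blast
  qed
  define Q where "Q W \<longleftrightarrow> subspace W \<and> W \<subseteq> Sp \<and> W \<noteq> {0} \<and> (\<forall>H\<in>a. \<forall>w\<in>W. br H w \<in> W)" for W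
  have "Q Sp" unfolding Q_def using sub_Sp Sp_ne inv_Sp by blast
  then obtain W where QW: "Q W" and Wmin: "\<And>W'. Q W' \<Longrightarrow> dim W \<le> dim W'"
    using ex_has_least_nat[of Q Sp dim] by blast
  have W: "subspace W" "W \<subseteq> Sp" "W \<noteq> {0}" "\<And>H w. H \<in> a \<Longrightarrow> w \<in> W \<Longrightarrow> br H w \<in> W"
    using QW unfolding Q_def by blast+
  obtain x0 where x0: "x0 \<in> W" "x0 \<noteq> 0" using W(1,3) subspace_0 by blast
  have "\<forall>H\<in>a. \<exists>l. br H x0 = l *\<^sub>R x0"
  proof
    fix H assume H: "H \<in> a"
    obtain x l where x: "x \<in> W" "x \<noteq> 0" "br H x = l *\<^sub>R x"
      using eigen[OF W(1) W(3) _ linear_r selfadj[OF a_p[OF H]]] W(4)[OF H] by blast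
    define W' where "W' = {w\<in>W. br H w = l *\<^sub>R w}"
    have "Q W'"
      unfolding Q_def
    proof (intro conjI)
      show "subspace W'" unfolding W'_def subspace_def using W(1)
        by (simp add: subspace_0 subspace_add subspace_scale add_r scaleR_r algebra_simps)
      show "W' \<subseteq> Sp" using W(2) unfolding W'_def by blast
      show "W' \<noteq> {0}" using x unfolding W'_def by blast
      show "\<forall>H'\<in>a. \<forall>w\<in>W'. br H' w \<in> W'"
      proof (intro ballI)
        fix H' w assume H': "H' \<in> a" and w: "w \<in> W'"
        have "br (br H H') w = br H (br H' w) - br H' (br H w)" by (rule jac2)
        then have "br H (br H' w) = br H' (br H w)" using a_ab[OF H H'] by simp
        also have "\<dots> = l *\<^sub>R br H' w" using w unfolding W'_def by (simp add: scaleR_r)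
        finally show "br H' w \<in> W'" using W(4)[OF H'] w unfolding W'_def by blast
      qed
    qed
    then have "dim W \<le> dim W'" by (rule Wmin)
    moreover have "W' \<subseteq> W" unfolding W'_def by blast
    ultimately have "W' = W" using subspace_dim_equal[of W' W] \<open>Q W'\<close> W(1) unfolding Q_def by blast
    then show "\<exists>l. br H x0 = l *\<^sub>R x0" using x0 unfolding W'_def by blast
  qed
  then obtain f where "\<forall>H\<in>a. br H x0 = f H *\<^sub>R x0" by metis
  then have "x0 \<in> E" unfolding E_def by blast
  then have "x0 \<in> span E" by (rule span_base)
  moreover have "x0 \<in> Sp" using x0 W(2) by blast
  ultimately have "P x0 x0 = 0" unfolding Sp_def by blast
  then show False using x0 P_self0 by blast
qed

end

lemma subspace_set_sum: assumes A: "subspace A" and B: "subspace B" shows "subspace (set_sum A B)"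
  unfolding subspace_def
proof (intro conjI ballI allI)
  have "(0::complex^'a) = 0 + 0" by simp
  then show "0 \<in> set_sum A B" unfolding set_sum_def using subspace_0[OF A] subspace_0[OF B] by blast
next
  fix x y assume "x \<in> set_sum A B" "y \<in> set_sum A B"
  then obtain a1 b1 a2 b2 where e: "x = a1 + b1" "y = a2 + b2" and m: "a1 \<in> A" "b1 \<in> B" "a2 \<in> A" "b2 \<in> B"
    unfolding set_sum_def by blast
  have "x + y = (a1 + a2) + (b1 + b2)" using e by (simp add: algebra_simps)
  then show "x + y \<in> set_sum A B" unfolding set_sum_def using subspace_add[OF A m(1,3)] subspace_add[OF B m(2,4)] by blast
next
  fix c x assume "x \<in> set_sum A B"
  then obtain a1 b1 where e: "x = a1 + b1" and m: "a1 \<in> A" "b1 \<in> B" unfolding set_sum_def by blast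
  have "c *\<^sub>R x = c *\<^sub>R a1 + c *\<^sub>R b1" using e by (simp add: scaleR_add_right)
  then show "c *\<^sub>R x \<in> set_sum A B" unfolding set_sum_def using subspace_scale[OF A m(1)] subspace_scale[OF B m(2)] by blast
qed

lemma (in AI) fixed_sub: "subspace (fixed_set s)"
  unfolding subspace_def fixed_set_def by (simp add: s_add s_scaleR)
lemma (in AI) minus_sub: "subspace (minus_set s)"
  unfolding subspace_def minus_set_def by (simp add: s_add s_scaleR)

context CT begin

lemma root_vec: "Y \<in> root_space br L A l \<Longrightarrow> H \<in> A \<Longrightarrow> br H Y = l H *\<^sub>R Y"
  unfolding root_space_def by (simp add: scaleR_cvec)

lemma th_root: assumes "\<forall>H\<in>A. \<theta> H = - H" "Y \<in> root_space br L A l" "H \<in> A"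
  shows "br H (\<theta> Y) = (- l H) *\<^sub>R \<theta> Y"
proof -
  have "br H (\<theta> Y) = \<theta> (br (\<theta> H) Y)" by (simp add: th.s_br)
  also have "\<dots> = \<theta> (- (l H *\<^sub>R Y))" using assms by (simp add: neg_l root_vec)
  finally show ?thesis by (simp add: th.s_neg th.s_scaleR)
qed

lemma orth_hN:
  assumes Ath: "\<forall>H\<in>A. \<theta> H = - H" and Aab: "\<forall>H\<in>A. \<forall>H'\<in>A. br H H' = 0"
    and Pn: "\<forall>l\<in>Ps. \<exists>H\<in>A. l H \<noteq> 0"
    and h: "h \<in> A" and m: "m \<in> nilp br L A Ps"
  shows "P h m = 0 \<and> P h (\<theta> m) = 0"
proof -
  have sub: "subspace {m. P h m = 0 \<and> P h (\<theta> m) = 0}"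
    unfolding subspace_def by (simp add: P_add_r P_scaleR_r th.s_add th.s_scaleR)
  show ?thesis
  proof (rule span_induct[OF m[unfolded nilp_def] sub])
    fix Y assume "Y \<in> (\<Union>l\<in>Ps. root_space br L A l)"
    then obtain l where l: "l \<in> Ps" "Y \<in> root_space br L A l" by blast
    obtain H where H: "H \<in> A" "l H \<noteq> 0" using Pn l(1) by blast
    have bh: "br H h = 0 *\<^sub>R h" using Aab H(1) h by simp
    have "P h Y = 0" by (rule orth[OF _ bh root_vec[OF l(2) H(1)]]) (use Ath H in auto)
    moreover have "P h (\<theta> Y) = 0" by (rule orth[OF _ bh th_root[OF Ath l(2) H(1)]]) (use Ath H in auto)
    ultimately show "P h Y = 0 \<and> P h (\<theta> Y) = 0" by simp
  qed
qed

lemma hN0: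
  assumes Ath: "\<forall>H\<in>A. \<theta> H = - H" and Aab: "\<forall>H\<in>A. \<forall>H'\<in>A. br H H' = 0"
    and Pn: "\<forall>l\<in>Ps. \<exists>H\<in>A. l H \<noteq> 0"
    and h: "h \<in> A" and m: "h \<in> nilp br L A Ps"
  shows "h = 0"
  using orth_hN[OF Ath Aab Pn h m] P_self0 by blast

lemma uniq_gen:
  assumes Ath: "\<forall>H\<in>A. \<theta> H = - H" and Aab: "\<forall>H\<in>A. \<forall>H'\<in>A. br H H' = 0"
    and Pn: "\<forall>l\<in>Ps. \<exists>H\<in>A. l H \<noteq> 0"
    and Pd: "\<forall>l\<in>Ps. \<forall>l'\<in>Ps. \<exists>H\<in>A. l H \<noteq> - l' H"
    and h: "h \<in> A" and m: "m \<in> nilp br L A Ps" and k: "\<theta> (h + m) = h + m"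
  shows "h + m = 0"
proof -
  have o1: "P h m = 0" "P h (\<theta> m) = 0" using orth_hN[OF Ath Aab Pn h m] by auto
  have thh: "\<theta> h = - h" using Ath h by blast
  have "- h + \<theta> m = h + m" using k by (simp add: th.s_add thh)
  then have "(2::real) *\<^sub>R h = \<theta> m - m" by (simp add: algebra_simps scaleR_2)
  then have "P h ((2::real) *\<^sub>R h) = P h (\<theta> m) - P h m" by (simp add: P_diff_r)
  then have "P h h = 0" using o1 by (simp add: P_scaleR_r)
  then have h0: "h = 0" using P_self0 by blast
  then have mm: "\<theta> m = m" using k by simp
  have "\<forall>m1\<in>nilp br L A Ps. \<forall>m2\<in>nilp br L A Ps. P m1 (\<theta> m2) = 0"
  proof (intro ballI)
    fix m1 m2 assume m1: "m1 \<in> nilp br L A Ps" and m2: "m2 \<in> nilp br L A Ps"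
    have sub2: "subspace {x. P x (\<theta> m2) = 0}" unfolding subspace_def by (simp add: P_add_l P_scaleR_l)
    show "P m1 (\<theta> m2) = 0"
    proof (rule span_induct[OF m1[unfolded nilp_def] sub2])
      fix Y assume "Y \<in> (\<Union>l\<in>Ps. root_space br L A l)"
      then obtain l where l: "l \<in> Ps" "Y \<in> root_space br L A l" by blast
      have sub3: "subspace {x. P Y (\<theta> x) = 0}" unfolding subspace_def by (simp add: P_add_r P_scaleR_r th.s_add th.s_scaleR)
      have "P Y (\<theta> m2) = 0"
      proof (rule span_induct[OF m2[unfolded nilp_def] sub3])
        fix Y' assume "Y' \<in> (\<Union>l\<in>Ps. root_space br L A l)"
        then obtain l' where l': "l' \<in> Ps" "Y' \<in> root_space br L A l'" by blast
        obtain H where H: "H \<in> A" "l H \<noteq> - l' H" using Pd l(1) l'(1) by blast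
        have "P Y (\<theta> Y') = 0"
          by (rule orth[OF _ root_vec[OF l(2) H(1)] th_root[OF Ath l'(2) H(1)]]) (use Ath H in auto)
        then show "P Y (\<theta> Y') = 0" by simp
      qed
      then show "P Y (\<theta> m2) = 0" by simp
    qed
  qed
  then have "P m (\<theta> m) = 0" using m by blast
  then have "m = 0" using mm P_self0 by simp
  then show ?thesis using h0 by simp
qed

end

context IW begin

lemma neg_root: assumes al: "\<alpha> \<in> roots br UNIV a" shows "(\<lambda>H. - \<alpha> H) \<in> roots br UNIV a"
proof -
  have "0 \<in> root_space br UNIV a \<alpha>" unfolding root_space_def by simp
  with al obtain Y where Y: "Y \<in> root_space br UNIV a \<alpha>" "Y \<noteq> 0" unfolding roots_def by blast
  have "\<theta> Y \<in> root_space br UNIV a (\<lambda>H. - \<alpha> H)"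
    unfolding root_space_def using th_root[OF _ Y(1)] a_p by (simp add: scaleR_cvec)
  moreover have "\<theta> Y \<noteq> 0" using Y(2) th.s_eq0 by blast
  ultimately have "root_space br UNIV a (\<lambda>H. - \<alpha> H) \<noteq> {0}" by blast
  then show ?thesis using al unfolding roots_def by auto
qed

lemma exist:
  assumes ord: "root_ordering br a Pos"
  shows "\<exists>k\<in>fixed_set \<theta>. X - k \<in> set_sum a (nilp br UNIV a Pos)"
proof -
  define N where "N = nilp br UNIV a Pos"
  define U where "U = set_sum a N"
  have subN: "subspace N" unfolding N_def nilp_def by (rule subspace_span)
  have subU: "subspace U" unfolding U_def by (rule subspace_set_sum[OF a_sub subN])
  have subK: "subspace (fixed_set \<theta>)" by (rule th.fixed_sub)
  obtain H0 where H0: "H0 \<in> a" "\<forall>\<alpha>\<in>roots br UNIV a. \<alpha> H0 \<noteq> 0" "Pos = {\<alpha>\<in>roots br UNIV a. \<alpha> H0 > 0}"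
    using ord unfolding root_ordering_def by blast
  have aU: "h \<in> U" if "h \<in> a" for h
  proof -
    have "h = h + 0" by simp
    then show ?thesis unfolding U_def set_sum_def using that subspace_0[OF subN] by blast
  qed
  have NU: "m \<in> U" if "m \<in> N" for m
  proof -
    have "m = 0 + m" by simp
    then show ?thesis unfolding U_def set_sum_def using that subspace_0[OF a_sub] by blast
  qed
  define V where "V = {X. \<exists>k\<in>fixed_set \<theta>. X - k \<in> U}"
  have subV: "subspace V" unfolding subspace_def V_def
  proof (intro conjI ballI allI)
    show "0 \<in> {X. \<exists>k\<in>fixed_set \<theta>. X - k \<in> U}" using subspace_0[OF subK] subspace_0[OF subU] by force
  next
    fix x y assume "x \<in> {X. \<exists>k\<in>fixed_set \<theta>. X - k \<in> U}" "y \<in> {X. \<exists>k\<in>fixed_set \<theta>. X - k \<in> U}"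
    then obtain k1 k2 where k: "k1 \<in> fixed_set \<theta>" "x - k1 \<in> U" "k2 \<in> fixed_set \<theta>" "y - k2 \<in> U" by blast
    have "(x + y) - (k1 + k2) = (x - k1) + (y - k2)" by (simp add: algebra_simps)
    then show "x + y \<in> {X. \<exists>k\<in>fixed_set \<theta>. X - k \<in> U}"
      using subspace_add[OF subK k(1,3)] subspace_add[OF subU k(2,4)] by (metis (mono_tags, lifting) mem_Collect_eq)
  next
    fix c x assume "x \<in> {X. \<exists>k\<in>fixed_set \<theta>. X - k \<in> U}"
    then obtain k1 where k: "k1 \<in> fixed_set \<theta>" "x - k1 \<in> U" by blast
    have "c *\<^sub>R x - c *\<^sub>R k1 = c *\<^sub>R (x - k1)" by (simp add: algebra_simps)
    then show "c *\<^sub>R x \<in> {X. \<exists>k\<in>fixed_set \<theta>. X - k \<in> U}"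
      using subspace_scale[OF subK k(1), of c] subspace_scale[OF subU k(2), of c] by (metis (mono_tags, lifting) mem_Collect_eq)
  qed
  have EV: "E \<subseteq> V"
  proof
    fix X assume "X \<in> E"
    then obtain f where f: "\<forall>H\<in>a. br H X = f H *\<^sub>R X" unfolding E_def by blast
    show "X \<in> V"
    proof (cases "\<forall>H\<in>a. f H = 0")
      case True
      define k where "k = (1/2::real) *\<^sub>R (X + \<theta> X)"
      define h where "h = (1/2::real) *\<^sub>R (X - \<theta> X)"
      have kK: "k \<in> fixed_set \<theta>" unfolding k_def fixed_set_def by (simp add: th.s_scaleR th.s_add add.commute)
      have Xk: "X - k = h" unfolding k_def h_def by (simp add: vec_eq_iff scaleR_cvec field_simps)
      have hp: "\<theta> h = - h" unfolding h_def by (simp add: th.s_scaleR th.s_diff algebra_simps)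
      have brX: "br H X = 0" if "H \<in> a" for H using f True that by simp
      have brh: "br H h = 0" if H: "H \<in> a" for H
      proof -
        have "br H (\<theta> X) = \<theta> (br (\<theta> H) X)" by (simp add: th.s_br)
        also have "\<dots> = 0" using a_p[OF H] brX[OF a_sub[THEN subspace_neg, OF H]] by (simp add: neg_l brX[OF H])
        finally show ?thesis unfolding h_def using brX[OF H] by (simp add: scaleR_r diff_r)
      qed
      define B where "B = span (insert h a)"
      have "B = a"
      proof -
        have "subspace B" unfolding B_def by (rule subspace_span)
        moreover have "a \<subseteq> B" unfolding B_def by (meson span_superset subset_insertI subset_trans)
        moreover have "B \<subseteq> minus_set \<theta>"
          unfolding B_def
          by (rule span_minimal) (use hp a_p th.minus_sub in \<open>auto simp: minus_set_def\<close>)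
        moreover have "abelian br B"
          unfolding abelian_def
        proof (intro ballI)
          fix x y assume x: "x \<in> B" and y: "y \<in> B"
          obtain c1 where c1: "x - c1 *\<^sub>R h \<in> a" using x unfolding B_def span_insert span_eq_iff[THEN iffD2, OF a_sub] by blast
          obtain c2 where c2: "y - c2 *\<^sub>R h \<in> a" using y unfolding B_def span_insert span_eq_iff[THEN iffD2, OF a_sub] by blast
          define A1 where "A1 = x - c1 *\<^sub>R h"
          define A2 where "A2 = y - c2 *\<^sub>R h"
          have x': "x = A1 + c1 *\<^sub>R h" and y': "y = A2 + c2 *\<^sub>R h" unfolding A1_def A2_def by simp_all
          have "br A1 A2 = 0" using a_ab c1 c2 unfolding A1_def A2_def by blast
          moreover have "br A1 h = 0" using brh c1 unfolding A1_def by blast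
          moreover have "br h A2 = 0" using brh[of A2] c2 anti[of h A2] unfolding A2_def by simp
          ultimately show "br x y = 0" unfolding x' y' by (simp add: add_l add_r scaleR_l scaleR_r)
        qed
        ultimately show ?thesis using amax unfolding max_abelian_in_def by blast
      qed
      then have "h \<in> a" unfolding B_def by (metis insert_subset span_superset)
      then show ?thesis unfolding V_def using kK Xk aU by blast
    next
      case False
      then obtain H1 where H1: "H1 \<in> a" "f H1 \<noteq> 0" by blast
      show ?thesis
      proof (cases "X = 0")
        case True then show ?thesis using subV subspace_0 by blast
      next
        case X0: False
        define \<alpha> where "\<alpha> H = (if H \<in> a then f H else 0)" for H
        have Xr: "X \<in> root_space br UNIV a \<alpha>" unfolding root_space_def \<alpha>_def using f by (simp add: scaleR_cvec)
        have al: "\<alpha> \<in> roots br UNIV a" unfolding roots_def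
          using Xr X0 H1 unfolding \<alpha>_def by auto
        show ?thesis
        proof (cases "\<alpha> H0 > 0")
          case True
          then have "\<alpha> \<in> Pos" using H0(3) al by blast
          then have "X \<in> N" unfolding N_def nilp_def using Xr by (blast intro: span_base)
          then have "X - 0 \<in> U" using NU by simp
          then show ?thesis unfolding V_def using subspace_0[OF subK] by blast
        next
          case False
          then have neg: "\<alpha> H0 < 0" using H0(2) al by (meson linorder_neqE_linordered_idom)
          have "(\<lambda>H. - \<alpha> H) \<in> Pos" using neg_root[OF al] H0(3) neg by simp
          moreover have "\<theta> X \<in> root_space br UNIV a (\<lambda>H. - \<alpha> H)"
            unfolding root_space_def using th_root[OF _ Xr] a_p by (simp add: scaleR_cvec)
          ultimately have "\<theta> X \<in> N" unfolding N_def nilp_def by (blast intro: span_base)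
          then have "- \<theta> X \<in> N" using subspace_neg[OF subN] by blast
          then have "X - (X + \<theta> X) \<in> U" using NU by simp
          moreover have "X + \<theta> X \<in> fixed_set \<theta>" unfolding fixed_set_def by (simp add: th.s_add add.commute)
          ultimately show ?thesis unfolding V_def by blast
        qed
      qed
    qed
  qed
  have "X \<in> V" using span_minimal[OF EV subV] spanE by blast
  then show ?thesis unfolding V_def U_def N_def by blast
qed

end

locale MAIN = IW br \<theta> a + ta: AI br \<tau>
  for br :: "complex^'n::finite \<Rightarrow> complex^'n \<Rightarrow> complex^'n" and \<theta> a \<tau> +
  fixes Pos :: "(complex^'n \<Rightarrow> real) set"
  assumes ord: "root_ordering br a Pos"
    and comm: "\<And>x. \<tau> (\<theta> x) = \<theta> (\<tau> x)"
    and d1: "\<tau> ` vec.span a \<subseteq> vec.span a"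
    and e: "\<And>\<alpha> \<beta>. \<alpha> \<in> roots br UNIV a \<Longrightarrow> \<beta> \<in> roots br UNIV a \<Longrightarrow>
              (\<forall>H\<in>a \<inter> fixed_set \<tau>. \<alpha> H = \<beta> H) \<Longrightarrow> (\<alpha> \<in> Pos \<longleftrightarrow> \<beta> \<in> Pos)"
begin

definition "H0 = (SOME H0. H0 \<in> a \<and> (\<forall>\<alpha>\<in>roots br UNIV a. \<alpha> H0 \<noteq> 0) \<and> Pos = {\<alpha>\<in>roots br UNIV a. \<alpha> H0 > 0})"

lemma H0: "H0 \<in> a" "\<forall>\<alpha>\<in>roots br UNIV a. \<alpha> H0 \<noteq> 0" "Pos = {\<alpha>\<in>roots br UNIV a. \<alpha> H0 > 0}"
proof -
  have "\<exists>H0. H0 \<in> a \<and> (\<forall>\<alpha>\<in>roots br UNIV a. \<alpha> H0 \<noteq> 0) \<and> Pos = {\<alpha>\<in>roots br UNIV a. \<alpha> H0 > 0}"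
    using ord unfolding root_ordering_def by blast
  from someI_ex[OF this] show "H0 \<in> a" "\<forall>\<alpha>\<in>roots br UNIV a. \<alpha> H0 \<noteq> 0" "Pos = {\<alpha>\<in>roots br UNIV a. \<alpha> H0 > 0}"
    unfolding H0_def by blast+
qed

lemma PosD: "\<alpha> \<in> Pos \<Longrightarrow> \<alpha> \<in> roots br UNIV a \<and> \<alpha> H0 > 0" using H0(3) by blast

lemma span_decomp: assumes x: "x \<in> vec.span a" shows "\<exists>A1 A2. A1 \<in> a \<and> A2 \<in> a \<and> x = A1 + \<i> *s A2"
proof -
  have sub: "vec.subspace {x. \<exists>A1 A2. A1 \<in> a \<and> A2 \<in> a \<and> x = A1 + \<i> *s A2}"
    unfolding vec.subspace_def
  proof (intro conjI ballI allI)
    show "0 \<in> {x. \<exists>A1 A2. A1 \<in> a \<and> A2 \<in> a \<and> x = A1 + \<i> *s A2}" using subspace_0[OF a_sub] by force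
  next
    fix x y assume "x \<in> {x. \<exists>A1 A2. A1 \<in> a \<and> A2 \<in> a \<and> x = A1 + \<i> *s A2}" "y \<in> {x. \<exists>A1 A2. A1 \<in> a \<and> A2 \<in> a \<and> x = A1 + \<i> *s A2}"
    then obtain A1 A2 B1 B2 where m: "A1 \<in> a" "A2 \<in> a" "B1 \<in> a" "B2 \<in> a" and xy: "x = A1 + \<i> *s A2" "y = B1 + \<i> *s B2" by blast
    have "x + y = (A1 + B1) + \<i> *s (A2 + B2)" unfolding xy by (simp add: vec_eq_iff algebra_simps)
    then show "x + y \<in> {x. \<exists>A1 A2. A1 \<in> a \<and> A2 \<in> a \<and> x = A1 + \<i> *s A2}"
      using subspace_add[OF a_sub m(1,3)] subspace_add[OF a_sub m(2,4)] by blast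
  next
    fix c x assume "x \<in> {x. \<exists>A1 A2. A1 \<in> a \<and> A2 \<in> a \<and> x = A1 + \<i> *s A2}"
    then obtain A1 A2 where m: "A1 \<in> a" "A2 \<in> a" and xy: "x = A1 + \<i> *s A2" by blast
    have "c *s x = (Re c *\<^sub>R A1 - Im c *\<^sub>R A2) + \<i> *s (Re c *\<^sub>R A2 + Im c *\<^sub>R A1)"
      unfolding xy by (simp add: vec_eq_iff scaleR_cvec algebra_simps complex_eq_iff)
    moreover have "Re c *\<^sub>R A1 - Im c *\<^sub>R A2 \<in> a" using m a_sub by (simp add: subspace_diff subspace_scale)
    moreover have "Re c *\<^sub>R A2 + Im c *\<^sub>R A1 \<in> a" using m a_sub by (simp add: subspace_add subspace_scale)
    ultimately show "c *s x \<in> {x. \<exists>A1 A2. A1 \<in> a \<and> A2 \<in> a \<and> x = A1 + \<i> *s A2}" by blast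
  qed
  show ?thesis
  proof (rule vec.span_induct[OF x sub])
    fix x assume "x \<in> a"
    then show "\<exists>A1 A2. A1 \<in> a \<and> A2 \<in> a \<and> x = A1 + \<i> *s A2" using subspace_0[OF a_sub] by force
  qed
qed

lemma tau_a: assumes H: "H \<in> a" shows "\<tau> H \<in> a"
proof -
  have "\<tau> H \<in> vec.span a" using d1 H vec.span_base by blast
  then obtain A1 A2 where m: "A1 \<in> a" "A2 \<in> a" and eq: "\<tau> H = A1 + \<i> *s A2" using span_decomp by blast
  have "\<theta> (\<tau> H) = - \<tau> H" using comm[of H] a_p[OF H] by (simp add: ta.s_neg)
  moreover have "\<theta> (\<tau> H) = - A1 + \<i> *s A2" unfolding eq using a_p[OF m(1)] a_p[OF m(2)]
    by (simp add: th.s_add th.s_smult)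
  ultimately have "- A1 + \<i> *s A2 = - (A1 + \<i> *s A2)" using eq by simp
  then have "A2 = 0" by (simp add: vec_eq_iff)
  then show ?thesis using eq m by simp
qed

lemma tau_root: assumes al: "\<alpha> \<in> Pos" and Y: "Y \<in> root_space br UNIV a \<alpha>"
  shows "\<tau> Y \<in> nilp br UNIV a Pos"
proof (cases "Y = 0")
  case True then show ?thesis unfolding nilp_def by (simp add: span_zero)
next
  case False
  define \<beta> where "\<beta> H = (if H \<in> a then \<alpha> (\<tau> H) else 0)" for H
  have alr: "\<alpha> \<in> roots br UNIV a" using PosD[OF al] by blast
  have Yb: "\<tau> Y \<in> root_space br UNIV a \<beta>"
    unfolding root_space_def
  proof (intro CollectI conjI ballI UNIV_I)
    fix H assume H: "H \<in> a"
    have "br H (\<tau> Y) = \<tau> (br (\<tau> H) Y)" by (simp add: ta.s_br)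
    also have "\<dots> = \<tau> (complex_of_real (\<alpha> (\<tau> H)) *s Y)" using Y tau_a[OF H] unfolding root_space_def by simp
    finally show "br H (\<tau> Y) = complex_of_real (\<beta> H) *s \<tau> Y" unfolding \<beta>_def using H by (simp add: ta.s_smult)
  qed
  have br: "\<beta> \<in> roots br UNIV a"
    unfolding roots_def
  proof (intro CollectI conjI)
    show "\<forall>x. x \<notin> a \<longrightarrow> \<beta> x = 0" unfolding \<beta>_def by simp
    obtain H1 where H1: "H1 \<in> a" "\<alpha> H1 \<noteq> 0" using alr unfolding roots_def by blast
    have "\<beta> (\<tau> H1) = \<alpha> H1" unfolding \<beta>_def using tau_a[OF H1(1)] by simp
    then show "\<exists>H\<in>a. \<beta> H \<noteq> 0" using H1 tau_a[OF H1(1)] by metis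
    show "root_space br UNIV a \<beta> \<noteq> {0}" using Yb False ta.s_eq0 by blast
  qed
  have "\<forall>H\<in>a \<inter> fixed_set \<tau>. \<alpha> H = \<beta> H" unfolding \<beta>_def fixed_set_def by simp
  then have "\<beta> \<in> Pos" using e[OF alr br] al by blast
  then show ?thesis unfolding nilp_def using Yb by (blast intro: span_base)
qed

lemma tau_N: assumes m: "m \<in> nilp br UNIV a Pos" shows "\<tau> m \<in> nilp br UNIV a Pos"
proof -
  have sub: "subspace {m. \<tau> m \<in> nilp br UNIV a Pos}"
    unfolding subspace_def nilp_def by (simp add: ta.s_add ta.s_scaleR span_add span_scale span_zero)
  show ?thesis
    by (rule span_induct[OF m[unfolded nilp_def] sub]) (use tau_root in auto)
qed

lemma restr_nonzero: assumes al: "\<alpha> \<in> Pos" shows "\<exists>H\<in>a \<inter> fixed_set \<tau>. \<alpha> H \<noteq> 0"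
proof (rule ccontr)
  assume "\<not> ?thesis"
  then have z: "\<forall>H\<in>a \<inter> fixed_set \<tau>. \<alpha> H = (\<lambda>H. - \<alpha> H) H" by simp
  have alr: "\<alpha> \<in> roots br UNIV a" "\<alpha> H0 > 0" using PosD[OF al] by blast+
  have "(\<lambda>H. - \<alpha> H) \<in> Pos" using e[OF alr(1) neg_root[OF alr(1)] z] al by blast
  then show False using PosD alr(2) by fastforce
qed

definition "Pos0 = {l \<in> roots br (fixed_set \<tau>) (a \<inter> fixed_set \<tau>). \<exists>\<alpha>\<in>Pos. \<forall>H\<in>a \<inter> fixed_set \<tau>. \<alpha> H = l H}"

lemma N_N0: assumes m: "m \<in> nilp br UNIV a Pos"
  shows "m + \<tau> m \<in> nilp br (fixed_set \<tau>) (a \<inter> fixed_set \<tau>) Pos0"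
proof -
  let ?N0 = "nilp br (fixed_set \<tau>) (a \<inter> fixed_set \<tau>) Pos0"
  have sN0: "subspace ?N0" unfolding nilp_def by (rule subspace_span)
  have a1: "(x + y) + \<tau> (x + y) \<in> ?N0" if "x + \<tau> x \<in> ?N0" "y + \<tau> y \<in> ?N0" for x y
  proof -
    have "(x + y) + \<tau> (x + y) = (x + \<tau> x) + (y + \<tau> y)" by (simp add: ta.s_add algebra_simps)
    then show ?thesis using subspace_add[OF sN0 that] by (simp only:)
  qed
  have a2: "c *\<^sub>R x + \<tau> (c *\<^sub>R x) \<in> ?N0" if "x + \<tau> x \<in> ?N0" for c x
  proof -
    have "c *\<^sub>R x + \<tau> (c *\<^sub>R x) = c *\<^sub>R (x + \<tau> x)" by (simp add: ta.s_scaleR scaleR_add_right)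
    then show ?thesis using subspace_scale[OF sN0 that] by (simp only:)
  qed
  have sub: "subspace {m. m + \<tau> m \<in> ?N0}"
    unfolding subspace_def using subspace_0[OF sN0] a1 a2 by simp
  show ?thesis
  proof (rule span_induct[OF m[unfolded nilp_def] sub])
    fix Y assume "Y \<in> (\<Union>\<alpha>\<in>Pos. root_space br UNIV a \<alpha>)"
    then obtain \<alpha> where al: "\<alpha> \<in> Pos" and Y: "Y \<in> root_space br UNIV a \<alpha>" by blast
    show "Y + \<tau> Y \<in> ?N0"
    proof (cases "Y + \<tau> Y = 0")
      case True then show ?thesis unfolding nilp_def by (simp add: span_zero)
    next
      case False
      define l where "l H = (if H \<in> a \<inter> fixed_set \<tau> then \<alpha> H else 0)" for H
      have Zr: "Y + \<tau> Y \<in> root_space br (fixed_set \<tau>) (a \<inter> fixed_set \<tau>) l"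
        unfolding root_space_def
      proof (intro CollectI conjI ballI)
        show "Y + \<tau> Y \<in> fixed_set \<tau>" unfolding fixed_set_def by (simp add: ta.s_add add.commute)
        fix H assume H: "H \<in> a \<inter> fixed_set \<tau>"
        then have tH: "\<tau> H = H" and Ha: "H \<in> a" unfolding fixed_set_def by auto
        have bY: "br H Y = complex_of_real (\<alpha> H) *s Y" using Y Ha unfolding root_space_def by simp
        have "br H (\<tau> Y) = \<tau> (br (\<tau> H) Y)" by (simp add: ta.s_br)
        also have "\<dots> = complex_of_real (\<alpha> H) *s \<tau> Y" using tH bY by (simp add: ta.s_smult)
        finally show "br H (Y + \<tau> Y) = complex_of_real (l H) *s (Y + \<tau> Y)"
          unfolding l_def using H bY by (simp add: add_r vector_add_ldistrib)
      qed
      have "l \<in> Pos0" unfolding Pos0_def roots_def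
      proof (intro CollectI conjI)
        show "\<forall>x. x \<notin> a \<inter> fixed_set \<tau> \<longrightarrow> l x = 0" unfolding l_def by simp
        show "\<exists>H\<in>a \<inter> fixed_set \<tau>. l H \<noteq> 0" using restr_nonzero[OF al] unfolding l_def by auto
        show "root_space br (fixed_set \<tau>) (a \<inter> fixed_set \<tau>) l \<noteq> {0}" using Zr False by blast
        show "\<exists>\<alpha>\<in>Pos. \<forall>H\<in>a \<inter> fixed_set \<tau>. \<alpha> H = l H" using al unfolding l_def by auto
      qed
      then show ?thesis unfolding nilp_def using Zr by (blast intro: span_base)
    qed
  qed
qed

end

context MAIN begin

lemma main:
  "\<forall>X\<in>fixed_set \<tau>.
     toda br (fixed_set \<theta>) (set_sum a (nilp br UNIV a Pos)) X
   = toda br (fixed_set \<theta> \<inter> fixed_set \<tau>)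
        (set_sum (a \<inter> fixed_set \<tau>) (nilp br (fixed_set \<tau>) (a \<inter> fixed_set \<tau>) Pos0)) X"
proof
  fix X assume XF: "X \<in> fixed_set \<tau>"
  define K where "K = fixed_set \<theta>"
  define F where "F = fixed_set \<tau>"
  define N where "N = nilp br UNIV a Pos"
  define U where "U = set_sum a N"
  define a0 where "a0 = a \<inter> F"
  define N0 where "N0 = nilp br F a0 Pos0"
  define U0 where "U0 = set_sum a0 N0"
  have subK: "subspace K" unfolding K_def by (rule th.fixed_sub)
  have subF: "subspace F" unfolding F_def by (rule ta.fixed_sub)
  have subN: "subspace N" unfolding N_def nilp_def by (rule subspace_span)
  have subU: "subspace U" unfolding U_def by (rule subspace_set_sum[OF a_sub subN])
  have suba0: "subspace a0" unfolding a0_def by (rule subspace_inter[OF a_sub subF])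
  have subN0: "subspace N0" unfolding N0_def nilp_def by (rule subspace_span)
  have subU0: "subspace U0" unfolding U0_def by (rule subspace_set_sum[OF suba0 subN0])
  have Ath: "\<forall>H\<in>a. \<theta> H = - H" using a_p by blast
  have Aab: "\<forall>H\<in>a. \<forall>H'\<in>a. br H H' = 0" using a_ab by blast
  have Ath0: "\<forall>H\<in>a0. \<theta> H = - H" using a_p unfolding a0_def by blast
  have Aab0: "\<forall>H\<in>a0. \<forall>H'\<in>a0. br H H' = 0" using a_ab unfolding a0_def by blast
  have Pn: "\<forall>l\<in>Pos. \<exists>H\<in>a. l H \<noteq> 0" using PosD unfolding roots_def by blast
  have Pd: "\<forall>l\<in>Pos. \<forall>l'\<in>Pos. \<exists>H\<in>a. l H \<noteq> - l' H"
  proof (intro ballI)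
    fix l l' assume "l \<in> Pos" "l' \<in> Pos"
    then have "l H0 > 0" "l' H0 > 0" using PosD by blast+
    then show "\<exists>H\<in>a. l H \<noteq> - l' H" using H0(1) by (intro bexI[of _ H0]) auto
  qed
  have Pn0: "\<forall>l\<in>Pos0. \<exists>H\<in>a0. l H \<noteq> 0" unfolding Pos0_def roots_def a0_def F_def by blast
  have Pd0: "\<forall>l\<in>Pos0. \<forall>l'\<in>Pos0. \<exists>H\<in>a0. l H \<noteq> - l' H"
  proof (intro ballI)
    fix l l' assume l: "l \<in> Pos0" and l': "l' \<in> Pos0"
    obtain \<alpha> where al: "\<alpha> \<in> Pos" "\<forall>H\<in>a \<inter> fixed_set \<tau>. \<alpha> H = l H" using l unfolding Pos0_def by blast
    obtain \<alpha>' where al': "\<alpha>' \<in> Pos" "\<forall>H\<in>a \<inter> fixed_set \<tau>. \<alpha>' H = l' H" using l' unfolding Pos0_def by blast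
    show "\<exists>H\<in>a0. l H \<noteq> - l' H"
    proof (rule ccontr)
      assume "\<not> ?thesis"
      then have "\<forall>H\<in>a \<inter> fixed_set \<tau>. \<alpha> H = (\<lambda>H. - \<alpha>' H) H" using al(2) al'(2) unfolding a0_def F_def by auto
      moreover have "\<alpha> \<in> roots br UNIV a" "\<alpha>' \<in> roots br UNIV a" using PosD al(1) al'(1) by blast+
      ultimately have "(\<lambda>H. - \<alpha>' H) \<in> Pos" using e[OF _ neg_root] al(1) by blast
      then have "- \<alpha>' H0 > 0" using PosD by blast
      then show False using PosD[OF al'(1)] by simp
    qed
  qed
  have uniqU: "k1 = k2" if "k1 \<in> K" "k2 \<in> K" "X - k1 \<in> U" "X - k2 \<in> U" for k1 k2
  proof -
    have "k1 - k2 = (X - k2) - (X - k1)" by simp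
    then have "k1 - k2 \<in> U" using subspace_diff[OF subU that(4,3)] by simp
    then obtain h m where hm: "h \<in> a" "m \<in> N" "k1 - k2 = h + m" unfolding U_def set_sum_def by blast
    have "k1 - k2 \<in> K" using subspace_diff[OF subK that(1,2)] .
    then have "\<theta> (h + m) = h + m" using hm(3) unfolding K_def fixed_set_def by simp
    then have "h + m = 0" by (rule uniq_gen[OF Ath Aab Pn Pd hm(1) hm(2)[unfolded N_def]])
    then show ?thesis using hm(3) by simp
  qed
  have uniqU0: "k1 = k2" if "k1 \<in> K \<inter> F" "k2 \<in> K \<inter> F" "X - k1 \<in> U0" "X - k2 \<in> U0" for k1 k2
  proof -
    have "k1 - k2 = (X - k2) - (X - k1)" by simp
    then have "k1 - k2 \<in> U0" using subspace_diff[OF subU0 that(4,3)] by simp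
    then obtain h m where hm: "h \<in> a0" "m \<in> N0" "k1 - k2 = h + m" unfolding U0_def set_sum_def by blast
    have "k1 - k2 \<in> K" using subspace_diff[OF subK] that(1,2) by blast
    then have "\<theta> (h + m) = h + m" using hm(3) unfolding K_def fixed_set_def by simp
    then have "h + m = 0" by (rule uniq_gen[OF Ath0 Aab0 Pn0 Pd0 hm(1) hm(2)[unfolded N0_def]])
    then show ?thesis using hm(3) by simp
  qed
  obtain k where kK: "k \<in> K" and kU: "X - k \<in> U" using exist[OF ord, of X] unfolding K_def U_def N_def by blast
  have tauU: "\<tau> u \<in> U" if uU: "u \<in> U" for u
  proof -
    obtain h m where hm: "h \<in> a" "m \<in> N" "u = h + m" using uU unfolding U_def set_sum_def by blast
    have "\<tau> u = \<tau> h + \<tau> m" using hm(3) by (simp add: ta.s_add)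
    then show ?thesis unfolding U_def set_sum_def using tau_a[OF hm(1)] tau_N[OF hm(2)[unfolded N_def]] unfolding N_def by blast
  qed
  have tk: "\<tau> k \<in> K" using kK comm[of k] unfolding K_def fixed_set_def by simp
  have "X - \<tau> k = \<tau> (X - k)" using XF unfolding fixed_set_def by (simp add: ta.s_diff)
  then have "X - \<tau> k \<in> U" using tauU[OF kU] by simp
  then have tkk: "\<tau> k = k" using uniqU[OF tk kK _ kU] by blast
  obtain h m where hm: "h \<in> a" "m \<in> N" "X - k = h + m" using kU unfolding U_def set_sum_def by blast
  have "\<tau> (X - k) = X - k" using XF tkk unfolding fixed_set_def by (simp add: ta.s_diff)
  then have "\<tau> h + \<tau> m = h + m" using hm(3) by (simp add: ta.s_add)
  then have eq: "\<tau> h - h = m - \<tau> m" by (simp add: algebra_simps)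
  have "\<tau> h - h \<in> a" using subspace_diff[OF a_sub tau_a[OF hm(1)] hm(1)] .
  moreover have "\<tau> h - h \<in> nilp br UNIV a Pos"
    using eq subspace_diff[OF subN hm(2) tau_N[OF hm(2)[unfolded N_def], folded N_def]] unfolding N_def by simp
  ultimately have "\<tau> h - h = 0" by (rule hN0[OF Ath Aab Pn])
  then have th: "\<tau> h = h" and tm: "\<tau> m = m" using eq by auto
  have ha0: "h \<in> a0" using hm(1) th unfolding a0_def F_def fixed_set_def by simp
  have "m + \<tau> m \<in> N0" using N_N0[OF hm(2)[unfolded N_def]] unfolding N0_def F_def a0_def .
  then have "(1/2::real) *\<^sub>R (m + \<tau> m) \<in> N0" by (rule subspace_scale[OF subN0])
  moreover have "(1/2::real) *\<^sub>R (m + \<tau> m) = m" using tm scaleR_half_double by metis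
  ultimately have mN0: "m \<in> N0" by simp
  have kU0: "X - k \<in> U0" unfolding U0_def set_sum_def using hm(3) ha0 mN0 by blast
  have kKF: "k \<in> K \<inter> F" using kK tkk unfolding F_def fixed_set_def by simp
  have p1: "proj_along K U X = k" unfolding proj_along_def
    by (rule the_equality) (use kK kU uniqU in blast)+
  have p2: "proj_along (K \<inter> F) U0 X = k" unfolding proj_along_def
    by (rule the_equality) (use kKF kU0 uniqU0 in blast)+
  show "toda br (fixed_set \<theta>) (set_sum a (nilp br UNIV a Pos)) X
   = toda br (fixed_set \<theta> \<inter> fixed_set \<tau>)
        (set_sum (a \<inter> fixed_set \<tau>) (nilp br (fixed_set \<tau>) (a \<inter> fixed_set \<tau>) Pos0)) X"
    using p1 p2 unfolding toda_def K_def U_def N_def F_def U0_def N0_def a0_def by simp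
qed

end

theorem lemma4p1:
  fixes br :: "complex^'n::finite \<Rightarrow> complex^'n \<Rightarrow> complex^'n"
    and \<theta> \<tau> :: "complex^'n \<Rightarrow> complex^'n"
    and \<aa> :: "(complex^'n) set"
    and Pos :: "(complex^'n \<Rightarrow> real) set"
  assumes ss: "semisimple br"
    and cartan: "cartan_involution br \<theta>"
    and a_max: "max_abelian_in br \<aa> (minus_set \<theta>)"
    and ord: "root_ordering br \<aa> Pos"
    and tau: "antiholo_invol br \<tau>"
    and c: "\<And>x. \<tau> (\<theta> x) = \<theta> (\<tau> x)"
    and d1: "\<tau> ` vec.span \<aa> \<subseteq> vec.span \<aa>"
    and d2: "max_abelian_in br (\<aa> \<inter> fixed_set \<tau>) (minus_set \<theta> \<inter> fixed_set \<tau>)"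
    and e: "\<And>\<alpha> \<beta>. \<alpha> \<in> roots br UNIV \<aa> \<Longrightarrow> \<beta> \<in> roots br UNIV \<aa> \<Longrightarrow>
              (\<forall>H\<in>\<aa> \<inter> fixed_set \<tau>. \<alpha> H = \<beta> H) \<Longrightarrow> (\<alpha> \<in> Pos \<longleftrightarrow> \<beta> \<in> Pos)"
  shows "\<forall>X\<in>fixed_set \<tau>.
     toda br (fixed_set \<theta>) (set_sum \<aa> (nilp br UNIV \<aa> Pos)) X
   = toda br (fixed_set \<theta> \<inter> fixed_set \<tau>)
        (set_sum (\<aa> \<inter> fixed_set \<tau>)
           (nilp br (fixed_set \<tau>) (\<aa> \<inter> fixed_set \<tau>)
              {l \<in> roots br (fixed_set \<tau>) (\<aa> \<inter> fixed_set \<tau>).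
                 \<exists>\<alpha>\<in>Pos. \<forall>H\<in>\<aa> \<inter> fixed_set \<tau>. \<alpha> H = l H})) X"
proof -
  have lb: "lie_bracket br" using ss unfolding semisimple_def by blast
  have th: "antiholo_invol br \<theta>" and nd: "\<forall>x. x \<noteq> 0 \<longrightarrow> Re (killing br x (\<theta> x)) < 0"
    using cartan unfolding cartan_involution_def by blast+
  have M: "MAIN br \<theta> \<aa> \<tau> Pos"
  proof (rule MAIN.intro)
    show "IW br \<theta> \<aa>"
    proof (rule IW.intro)
      show "CT br \<theta>"
        by (rule CT.intro[OF LB.intro[OF lb] AI.intro[OF th] CT_axioms.intro]) (use nd in blast)
      show "IW_axioms br \<theta> \<aa>" by (rule IW_axioms.intro[OF a_max])
    qed
    show "AI br \<tau>" by (rule AI.intro[OF tau])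
    show "MAIN_axioms br \<theta> \<aa> \<tau> Pos"
      by (rule MAIN_axioms.intro[OF ord]) (use c d1 e in blast)+
  qed
  interpret MAIN br \<theta> \<aa> \<tau> Pos by (rule M)
  show ?thesis using main unfolding Pos0_def .
qed

end
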